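(* Let $A$ be a sub-tree of $T$ with sub-trees $A_0,\dots,A_m$ as in the context. For $i=0,\dots,m$ let $S_i^*$ be the inclusion-maximal set among the maximizers of $G(S,d(r_A))$ over $S\subseteq V_{A_i}$ (i.e. the maximal optimal set of $f_{A_i}$ at $x=d(r_A)$, which lies in its domain $[0,d(r_{A_i})]$). Then the inclusion-maximal optimal set of $f_A$ at $x=d(r_A)$, which is the largest element of the matryoshka $\mathcal{M}_A$, equals $S_0^*\cup S_1^*\cup\dots\cup S_m^*$.
   Context: Setting. $T$ is a finite tree rooted at $r_T$, node set $V_T$; every edge $e$ has weight $w_e\ge 0$. Every node $v$ has a probability $\pi_v\in(0,1]$ and a prize $p_v\in\mathbb{R}$. $d(v)$ is the total weight of the path from $r_T$ to $v$. A random set $\omega\subseteq V_T$ contains each node $v$ independently with probability $\pi_v$. For $S\subseteq V_T$, $P(S)=1-\prod_{s\in S}(1-\pi_s)$ ($P(\emptyset)=0$). For a node $a$, the sub-tree $A$ rooted at $r_A=a$ consists of $a$ and all its descendants, with node set $V_A$; if $a$ has children $c_1,\dots,c_m$, then $A_i$ ($1\le i\le m$) is the sub-tree rooted at $c_i$, $A_0$ is the sub-tree consisting of the single node $r_A$, $\mathcal{I}_A=\{0,1,\dots,m\}$, and $V_A^I=\bigcup_{i\in I}V_{A_i}$ for $I\subseteq\mathcal{I}_A$. For $Q\subseteq V_T$, $W(Q)$ is the total weight of the edges lying on at least one path from $r_T$ to a node of $Q$. For $S\subseteq V_A$ and $x\le d(r_A)$ the expected profit is $G(S,x)=\sum_{s\in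 S}p_s\pi_s-\mathbb{E}[W(S\cap\omega)]+x\,P(S)$. Characteristic function. For a sub-tree $A$, $I\subseteq\mathcal{I}_A$ and $x\in[0,d(r_A)]$, $f_A^I(x)=\max_{S\subseteq V_A^I}G(S,x)$, and $f_A=f_A^{\mathcal{I}_A}$. A set $S\subseteq V_A^I$ with $G(S,x)=f_A^I(x)$ is an optimal set (for $f_A^I$) at $x$. The matryoshka $\mathcal{M}_A^I$ is the family of all $S\subseteq V_A^I$ such that for some $x\in[0,d(r_A)]$, $S$ is an optimal set at $x$ and no proper superset of $S$ contained in $V_A^I$ is optimal at $x$; $\mathcal{M}_A=\mathcal{M}_A^{\mathcal{I}_A}$. *)

theory Defs
  imports Complex_Main
begin

text \<open>A finite rooted tree: node set V, root r, parent map par (meaningful on V - {r}).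
  Every non-root node v represents the edge (par v, v), whose weight is w v.\<close>

definition rooted_tree :: "'v set \<Rightarrow> 'v \<Rightarrow> ('v \<Rightarrow> 'v) \<Rightarrow> bool" where
  "rooted_tree V r par \<longleftrightarrow> finite V \<and> r \<in> V \<and> (\<forall>v\<in>V - {r}. par v \<in> V)
     \<and> (\<forall>v\<in>V. \<exists>n. (par ^^ n) v = r)"

definition depth :: "'v \<Rightarrow> ('v \<Rightarrow> 'v) \<Rightarrow> 'v \<Rightarrow> nat" where
  "depth r par v = (LEAST n. (par ^^ n) v = r)"

definition anc :: "'v \<Rightarrow> ('v \<Rightarrow> 'v) \<Rightarrow> 'v \<Rightarrow> 'v set" where
  "anc r par v = {(par ^^ k) v | k. k \<le> depth r par v}"

definition desc :: "'v set \<Rightarrow> 'v \<Rightarrow> ('v \<Rightarrow> 'v) \<Rightarrow> 'v \<Rightarrow> 'v set" where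
  "desc V r par a = {v \<in> V. a \<in> anc r par v}"

definition children :: "'v set \<Rightarrow> 'v \<Rightarrow> ('v \<Rightarrow> 'v) \<Rightarrow> 'v \<Rightarrow> 'v set" where
  "children V r par a = {c \<in> V. c \<noteq> r \<and> par c = a}"

definition dpath :: "'v \<Rightarrow> ('v \<Rightarrow> 'v) \<Rightarrow> ('v \<Rightarrow> real) \<Rightarrow> 'v \<Rightarrow> real" where
  "dpath r par w v = sum w (anc r par v - {r})"

definition Wt :: "'v \<Rightarrow> ('v \<Rightarrow> 'v) \<Rightarrow> ('v \<Rightarrow> real) \<Rightarrow> 'v set \<Rightarrow> real" where
  "Wt r par w Q = sum w ((\<Union>q\<in>Q. anc r par q) - {r})"

definition Pr :: "('v \<Rightarrow> real) \<Rightarrow> 'v set \<Rightarrow> real" where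
  "Pr \<pi> S = 1 - (\<Prod>s\<in>S. 1 - \<pi> s)"

text \<open>E[W(S \<inter> \<omega>)] with \<omega> containing each node independently with probability \<pi>.\<close>
definition expW :: "'v \<Rightarrow> ('v \<Rightarrow> 'v) \<Rightarrow> ('v \<Rightarrow> real) \<Rightarrow> ('v \<Rightarrow> real) \<Rightarrow> 'v set \<Rightarrow> real" where
  "expW r par w \<pi> S = (\<Sum>U\<in>Pow S. (\<Prod>s\<in>U. \<pi> s) * (\<Prod>s\<in>S - U. 1 - \<pi> s) * Wt r par w U)"

definition G :: "'v \<Rightarrow> ('v \<Rightarrow> 'v) \<Rightarrow> ('v \<Rightarrow> real) \<Rightarrow> ('v \<Rightarrow> real) \<Rightarrow> ('v \<Rightarrow> real)
    \<Rightarrow> 'v set \<Rightarrow> real \<Rightarrow> real" where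
  "G r par w \<pi> p S x = (\<Sum>s\<in>S. p s * \<pi> s) - expW r par w \<pi> S + x * Pr \<pi> S"

definition optimal :: "'v \<Rightarrow> ('v \<Rightarrow> 'v) \<Rightarrow> ('v \<Rightarrow> real) \<Rightarrow> ('v \<Rightarrow> real) \<Rightarrow> ('v \<Rightarrow> real)
    \<Rightarrow> 'v set \<Rightarrow> real \<Rightarrow> 'v set \<Rightarrow> bool" where
  "optimal r par w \<pi> p D x S \<longleftrightarrow> S \<subseteq> D \<and> (\<forall>S'. S' \<subseteq> D \<longrightarrow> G r par w \<pi> p S' x \<le> G r par w \<pi> p S x)"

definition largest_optimal :: "'v \<Rightarrow> ('v \<Rightarrow> 'v) \<Rightarrow> ('v \<Rightarrow> real) \<Rightarrow> ('v \<Rightarrow> real) \<Rightarrow> ('v \<Rightarrow> real)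
    \<Rightarrow> 'v set \<Rightarrow> real \<Rightarrow> 'v set \<Rightarrow> bool" where
  "largest_optimal r par w \<pi> p D x S \<longleftrightarrow> optimal r par w \<pi> p D x S
     \<and> (\<forall>S'. optimal r par w \<pi> p D x S' \<longrightarrow> S' \<subseteq> S)"

end

theory Submission
  imports Defs
begin

definition mu :: "('v \<Rightarrow> real) \<Rightarrow> 'v set \<Rightarrow> 'v set \<Rightarrow> real" where
  "mu \<pi> S U = (\<Prod>s\<in>U. \<pi> s) * (\<Prod>s\<in>S - U. 1 - \<pi> s)"

lemma pow_insert_sum:
  assumes fin: "finite S" and x: "x \<notin> S"
  shows "(\<Sum>U\<in>Pow (insert x S). mu \<pi> (insert x S) U * f U)
       = (\<Sum>U\<in>Pow S. mu \<pi> S U * (\<pi> x * f (insert x U) + (1 - \<pi> x) * f U))"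
proof -
  have disj: "Pow S \<inter> insert x ` Pow S = {}" using x by auto
  have inj: "inj_on (insert x) (Pow S)"
  proof (rule inj_onI)
    fix A B assume A: "A \<in> Pow S" and B: "B \<in> Pow S" and e: "insert x A = insert x B"
    have "x \<notin> A" "x \<notin> B" using A B x by auto
    then show "A = B" using e insert_ident by metis
  qed
  have m1: "mu \<pi> (insert x S) U = (1 - \<pi> x) * mu \<pi> S U" if "U \<in> Pow S" for U
  proof -
    have "insert x S - U = insert x (S - U)" using that x by blast
    moreover have "x \<notin> S - U" using x by blast
    ultimately show ?thesis unfolding mu_def using fin by simp
  qed
  have m2: "mu \<pi> (insert x S) (insert x U) = \<pi> x * mu \<pi> S U" if "U \<in> Pow S" for U
  proof -
    have "insert x S - insert x U = S - U" using that x by blast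
    moreover have "x \<notin> U" "finite U" using that x fin finite_subset by auto
    ultimately show ?thesis unfolding mu_def by simp
  qed
  have "(\<Sum>U\<in>Pow (insert x S). mu \<pi> (insert x S) U * f U)
      = (\<Sum>U\<in>Pow S. mu \<pi> (insert x S) U * f U) + (\<Sum>U\<in>insert x ` Pow S. mu \<pi> (insert x S) U * f U)"
    unfolding Pow_insert by (rule sum.union_disjoint) (use fin disj in auto)
  also have "(\<Sum>U\<in>insert x ` Pow S. mu \<pi> (insert x S) U * f U)
      = (\<Sum>U\<in>Pow S. mu \<pi> (insert x S) (insert x U) * f (insert x U))"
    using sum.reindex[OF inj] by simp
  also have "\<dots> = (\<Sum>U\<in>Pow S. \<pi> x * mu \<pi> S U * f (insert x U))"
    by (rule sum.cong) (use m2 in auto)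
  also have "(\<Sum>U\<in>Pow S. mu \<pi> (insert x S) U * f U) = (\<Sum>U\<in>Pow S. (1 - \<pi> x) * mu \<pi> S U * f U)"
    by (rule sum.cong) (use m1 in auto)
  finally show ?thesis by (simp add: sum.distrib[symmetric] algebra_simps)
qed

lemma pow_sum_avoid:
  assumes "finite S"
  shows "(\<Sum>U\<in>Pow S. mu \<pi> S U * (if U \<inter> B = {} then 1 else 0)) = (\<Prod>s\<in>S \<inter> B. 1 - \<pi> s)"
  using assms
proof (induction S rule: finite_induct)
  case empty
  then show ?case unfolding mu_def by simp
next
  case (insert x F)
  have "(\<Sum>U\<in>Pow (insert x F). mu \<pi> (insert x F) U * (if U \<inter> B = {} then 1 else 0))
      = (\<Sum>U\<in>Pow F. mu \<pi> F U * (\<pi> x * (if insert x U \<inter> B = {} then 1 else 0)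
                                   + (1 - \<pi> x) * (if U \<inter> B = {} then 1 else 0)))"
    by (rule pow_insert_sum[OF insert(1,2)])
  also have "\<dots> = (if x \<in> B then (1 - \<pi> x) else 1) * (\<Sum>U\<in>Pow F. mu \<pi> F U * (if U \<inter> B = {} then 1 else 0))"
    unfolding sum_distrib_left by (rule sum.cong) (auto simp: algebra_simps)
  also have "\<dots> = (\<Prod>s\<in>insert x F \<inter> B. 1 - \<pi> s)"
    using insert by (auto simp: Int_insert_left)
  finally show ?case .
qed

context
  fixes V :: "'v set" and r :: 'v and par :: "'v \<Rightarrow> 'v"
  assumes tree: "rooted_tree V r par"
begin

lemma reach: "q \<in> V \<Longrightarrow> (par ^^ depth r par q) q = r"
proof -
  assume "q \<in> V"
  then obtain n where "(par ^^ n) q = r" using tree unfolding rooted_tree_def by blast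
  then show ?thesis unfolding depth_def by (rule LeastI)
qed

lemma depth_min: "(par ^^ k) q = r \<Longrightarrow> depth r par q \<le> k"
  unfolding depth_def by (rule Least_le)

lemma path_ne_r: "k < depth r par q \<Longrightarrow> (par ^^ k) q \<noteq> r"
  using depth_min by fastforce

lemma path_in_V: "q \<in> V \<Longrightarrow> k \<le> depth r par q \<Longrightarrow> (par ^^ k) q \<in> V"
proof (induction k)
  case 0 then show ?case by simp
next
  case (Suc k)
  then have "(par ^^ k) q \<in> V" "(par ^^ k) q \<noteq> r" using path_ne_r by auto
  then show ?case using tree unfolding rooted_tree_def by auto
qed

lemma depth_path: "q \<in> V \<Longrightarrow> k \<le> depth r par q \<Longrightarrow> depth r par ((par ^^ k) q) = depth r par q - k"
proof -
  assume q: "q \<in> V" and k: "k \<le> depth r par q"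
  have "(par ^^ (depth r par q - k)) ((par ^^ k) q) = (par ^^ (depth r par q - k + k)) q"
    by (simp add: funpow_add)
  also have "\<dots> = r" using k reach[OF q] by simp
  finally have le: "depth r par ((par ^^ k) q) \<le> depth r par q - k" by (rule depth_min)
  have qk: "(par ^^ k) q \<in> V" using path_in_V q k by blast
  have "(par ^^ (depth r par ((par ^^ k) q) + k)) q = r"
    using reach[OF qk] by (simp add: funpow_add)
  then have "depth r par q \<le> depth r par ((par ^^ k) q) + k" by (rule depth_min)
  with le show ?thesis by linarith
qed

lemma anc_iff: "x \<in> anc r par y \<longleftrightarrow> (\<exists>k \<le> depth r par y. x = (par ^^ k) y)"
  unfolding anc_def by auto

lemma anc_V: "y \<in> V \<Longrightarrow> x \<in> anc r par y \<Longrightarrow> x \<in> V"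
proof -
  assume y: "y \<in> V" and x: "x \<in> anc r par y"
  obtain k where "k \<le> depth r par y" "x = (par ^^ k) y" using x unfolding anc_iff by blast
  then show ?thesis using path_in_V[OF y] by simp
qed

lemma self_anc: "y \<in> anc r par y"
  unfolding anc_iff by (rule exI[of _ 0]) simp

lemma anc_trans: "z \<in> V \<Longrightarrow> x \<in> anc r par y \<Longrightarrow> y \<in> anc r par z \<Longrightarrow> x \<in> anc r par z"
proof -
  assume z: "z \<in> V" and xy: "x \<in> anc r par y" and yz: "y \<in> anc r par z"
  obtain j where j: "j \<le> depth r par z" "y = (par ^^ j) z" using yz unfolding anc_iff by blast
  obtain i where i: "i \<le> depth r par y" "x = (par ^^ i) y" using xy unfolding anc_iff by blast
  have "depth r par y = depth r par z - j" using depth_path z j by simp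
  then have "i + j \<le> depth r par z" using i j by linarith
  moreover have "x = (par ^^ (i + j)) z" using i j by (simp add: funpow_add)
  ultimately show ?thesis unfolding anc_iff by blast
qed

lemma anc_depth: "z \<in> V \<Longrightarrow> x \<in> anc r par z \<Longrightarrow> depth r par x \<le> depth r par z \<and> (depth r par x = depth r par z \<longrightarrow> x = z)"
proof -
  assume z: "z \<in> V" and xz: "x \<in> anc r par z"
  obtain j where j: "j \<le> depth r par z" "x = (par ^^ j) z" using xz unfolding anc_iff by blast
  have "depth r par x = depth r par z - j" using depth_path z j by simp
  then have d1: "depth r par x \<le> depth r par z" by linarith
  have "depth r par x = depth r par z \<longrightarrow> x = z"
  proof
    assume "depth r par x = depth r par z"
    then have "j = 0" using \<open>depth r par x = depth r par z - j\<close> j(1) by linarith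
    then show "x = z" using j(2) by simp
  qed
  with d1 show ?thesis by blast
qed

lemma anc_chain: "q \<in> V \<Longrightarrow> x \<in> anc r par q \<Longrightarrow> y \<in> anc r par q \<Longrightarrow> x \<in> anc r par y \<or> y \<in> anc r par x"
proof -
  assume q: "q \<in> V" and xq: "x \<in> anc r par q" and yq: "y \<in> anc r par q"
  obtain i where i: "i \<le> depth r par q" "x = (par ^^ i) q" using xq unfolding anc_iff by blast
  obtain j where j: "j \<le> depth r par q" "y = (par ^^ j) q" using yq unfolding anc_iff by blast
  have dx: "depth r par x = depth r par q - i" using depth_path q i by simp
  have dy: "depth r par y = depth r par q - j" using depth_path q j by simp
  show ?thesis
  proof (cases "j \<le> i")
    case True
    have "(par ^^ (i - j)) y = (par ^^ (i - j + j)) q" using j by (simp add: funpow_add)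
    then have "x = (par ^^ (i - j)) y" using i True by simp
    moreover have "i - j \<le> depth r par y" using dy i True by linarith
    ultimately show ?thesis unfolding anc_iff by blast
  next
    case False
    have "(par ^^ (j - i)) x = (par ^^ (j - i + i)) q" using i by (simp add: funpow_add)
    then have "y = (par ^^ (j - i)) x" using j False by simp
    moreover have "j - i \<le> depth r par x" using dx j False by linarith
    ultimately show ?thesis unfolding anc_iff by blast
  qed
qed

lemma parent_anc: "c \<in> V \<Longrightarrow> c \<noteq> r \<Longrightarrow> par c \<in> anc r par c \<and> depth r par (par c) = depth r par c - 1 \<and> 1 \<le> depth r par c"
proof -
  assume c: "c \<in> V" "c \<noteq> r"
  have d: "1 \<le> depth r par c"
  proof (rule ccontr)
    assume "\<not> 1 \<le> depth r par c"
    then have "depth r par c = 0" by simp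
    then show False using reach[OF c(1)] c(2) by simp
  qed
  have "par c = (par ^^ 1) c" by simp
  then have "par c \<in> anc r par c" using d unfolding anc_iff by blast
  moreover have "depth r par (par c) = depth r par c - 1" using depth_path[OF c(1) d] by simp
  ultimately show ?thesis using d by blast
qed

lemma child_exists: "v \<in> V \<Longrightarrow> a \<in> anc r par v \<Longrightarrow> a \<noteq> v \<Longrightarrow> \<exists>c. c \<in> V \<and> c \<noteq> r \<and> par c = a \<and> c \<in> anc r par v"
proof -
  assume v: "v \<in> V" and av: "a \<in> anc r par v" and ne: "a \<noteq> v"
  obtain j where j: "j \<le> depth r par v" "a = (par ^^ j) v" using av unfolding anc_iff by blast
  then obtain i where i: "j = Suc i" using ne by (cases j) auto
  let ?c = "(par ^^ i) v"
  have "?c \<in> V" using path_in_V v j i by simp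
  moreover have "?c \<noteq> r" using path_ne_r j i by simp
  moreover have "par ?c = a" using j i by simp
  moreover have "?c \<in> anc r par v" unfolding anc_iff using j i by (intro exI[of _ i]) simp
  ultimately show ?thesis by blast
qed


lemma desc_V: "desc V r par x \<subseteq> V"
  unfolding desc_def by auto

lemma finV: "finite V"
  using tree unfolding rooted_tree_def by blast

lemma self_desc: "a \<in> V \<Longrightarrow> a \<in> desc V r par a"
  unfolding desc_def using self_anc by auto

lemma child_desc_sub: "c \<in> children V r par a \<Longrightarrow> desc V r par c \<subseteq> desc V r par a"
proof
  fix q assume c: "c \<in> children V r par a" and q: "q \<in> desc V r par c"
  have cV: "c \<in> V" "c \<noteq> r" "par c = a" using c unfolding children_def by auto
  have "q \<in> V" "c \<in> anc r par q" using q unfolding desc_def by auto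
  moreover have "a \<in> anc r par c" using parent_anc[OF cV(1,2)] cV(3) by simp
  ultimately have "a \<in> anc r par q" using anc_trans by blast
  then show "q \<in> desc V r par a" using \<open>q \<in> V\<close> unfolding desc_def by simp
qed

lemma desc_split: "desc V r par a \<subseteq> insert a (\<Union>c\<in>children V r par a. desc V r par c)"
proof
  fix q assume q: "q \<in> desc V r par a"
  show "q \<in> insert a (\<Union>c\<in>children V r par a. desc V r par c)"
  proof (cases "q = a")
    case True then show ?thesis by simp
  next
    case False
    have qV: "q \<in> V" "a \<in> anc r par q" using q unfolding desc_def by auto
    obtain c where c: "c \<in> V" "c \<noteq> r" "par c = a" "c \<in> anc r par q"
      using child_exists[OF qV] False by metis
    have "c \<in> children V r par a" using c unfolding children_def by simp
    moreover have "q \<in> desc V r par c" using c qV unfolding desc_def by simp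
    ultimately show ?thesis by blast
  qed
qed

lemma child_depth: "c \<in> children V r par a \<Longrightarrow> depth r par c = depth r par a + 1"
proof -
  assume c: "c \<in> children V r par a"
  have cV: "c \<in> V" "c \<noteq> r" "par c = a" using c unfolding children_def by auto
  have "depth r par a = depth r par c - 1" "1 \<le> depth r par c"
    using parent_anc[OF cV(1,2)] cV(3) by auto
  then show ?thesis by linarith
qed

lemma a_notin_child: "a \<in> V \<Longrightarrow> c \<in> children V r par a \<Longrightarrow> a \<notin> desc V r par c"
proof
  assume aV: "a \<in> V" and c: "c \<in> children V r par a" and ac: "a \<in> desc V r par c"
  have "c \<in> anc r par a" using ac unfolding desc_def by simp
  then have "depth r par c \<le> depth r par a" using anc_depth[OF aV] by blast
  then show False using child_depth[OF c] by linarith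
qed

lemma child_disj: "c1 \<in> children V r par a \<Longrightarrow> c2 \<in> children V r par a \<Longrightarrow> c1 \<noteq> c2
   \<Longrightarrow> desc V r par c1 \<inter> desc V r par c2 = {}"
proof (rule ccontr)
  assume c1: "c1 \<in> children V r par a" and c2: "c2 \<in> children V r par a" and ne: "c1 \<noteq> c2"
    and "desc V r par c1 \<inter> desc V r par c2 \<noteq> {}"
  then obtain q where q: "q \<in> V" "c1 \<in> anc r par q" "c2 \<in> anc r par q" unfolding desc_def by auto
  have c1V: "c1 \<in> V" and c2V: "c2 \<in> V" using c1 c2 unfolding children_def by auto
  have dd: "depth r par c1 = depth r par c2" using child_depth[OF c1] child_depth[OF c2] by simp
  from anc_chain[OF q] show False
  proof
    assume "c1 \<in> anc r par c2"
    then show False using anc_depth[OF c2V] dd ne by blast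
  next
    assume "c2 \<in> anc r par c1"
    then show False using anc_depth[OF c1V] dd ne by metis
  qed
qed

lemma off_path_child: "a \<in> V \<Longrightarrow> v \<in> V \<Longrightarrow> v \<notin> anc r par a \<Longrightarrow> q \<in> desc V r par a \<Longrightarrow> q \<in> desc V r par v
   \<Longrightarrow> \<exists>c\<in>children V r par a. v \<in> desc V r par c"
proof -
  assume aV: "a \<in> V" and vV: "v \<in> V" and na: "v \<notin> anc r par a"
    and qa: "q \<in> desc V r par a" and qv: "q \<in> desc V r par v"
  have q: "q \<in> V" "a \<in> anc r par q" "v \<in> anc r par q" using qa qv unfolding desc_def by auto
  have av: "a \<in> anc r par v" using anc_chain[OF q] na by blast
  have "a \<noteq> v" using na self_anc by metis
  then obtain c where c: "c \<in> V" "c \<noteq> r" "par c = a" "c \<in> anc r par v"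
    using child_exists[OF vV av] by metis
  have "c \<in> children V r par a" using c unfolding children_def by simp
  moreover have "v \<in> desc V r par c" using c vV unfolding desc_def by simp
  ultimately show ?thesis by blast
qed

lemma desc_mono: "v \<in> desc V r par c \<Longrightarrow> desc V r par v \<subseteq> desc V r par c"
  unfolding desc_def using anc_trans by blast

lemma desc_anc: "v \<in> anc r par a \<Longrightarrow> desc V r par a \<subseteq> desc V r par v"
  unfolding desc_def using anc_trans by blast

lemma expW_eq:
  assumes SV: "S \<subseteq> V"
  shows "expW r par w \<pi> S = (\<Sum>v\<in>V - {r}. w v * Pr \<pi> (S \<inter> desc V r par v))"
proof -
  have finS: "finite S" using SV finV finite_subset by blast
  define ind where "ind U v = (if U \<inter> desc V r par v = {} then (1::real) else 0)" for U v
  have Wt: "Wt r par w U = (\<Sum>v\<in>V - {r}. w v * (1 - ind U v))" if UV: "U \<subseteq> V" for U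
  proof -
    have "(\<Union>q\<in>U. anc r par q) - {r} = {v \<in> V - {r}. U \<inter> desc V r par v \<noteq> {}}"
    proof
      show "(\<Union>q\<in>U. anc r par q) - {r} \<subseteq> {v \<in> V - {r}. U \<inter> desc V r par v \<noteq> {}}"
      proof
        fix v assume "v \<in> (\<Union>q\<in>U. anc r par q) - {r}"
        then obtain q where q: "q \<in> U" "v \<in> anc r par q" "v \<noteq> r" by blast
        have "q \<in> V" using q UV by blast
        then have "v \<in> V" "q \<in> desc V r par v" using anc_V q unfolding desc_def by auto
        then show "v \<in> {v \<in> V - {r}. U \<inter> desc V r par v \<noteq> {}}" using q by blast
      qed
    next
      show "{v \<in> V - {r}. U \<inter> desc V r par v \<noteq> {}} \<subseteq> (\<Union>q\<in>U. anc r par q) - {r}"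
        unfolding desc_def by blast
    qed
    then have "Wt r par w U = sum w {v \<in> V - {r}. U \<inter> desc V r par v \<noteq> {}}"
      unfolding Wt_def by simp
    also have "\<dots> = (\<Sum>v\<in>V - {r}. if U \<inter> desc V r par v \<noteq> {} then w v else 0)"
      by (rule sum.inter_filter) (use finV in simp)
    also have "\<dots> = (\<Sum>v\<in>V - {r}. w v * (1 - ind U v))"
      by (rule sum.cong) (auto simp: ind_def)
    finally show ?thesis .
  qed
  have "expW r par w \<pi> S = (\<Sum>U\<in>Pow S. mu \<pi> S U * Wt r par w U)"
    unfolding expW_def mu_def by simp
  also have "\<dots> = (\<Sum>U\<in>Pow S. \<Sum>v\<in>V - {r}. mu \<pi> S U * (w v * (1 - ind U v)))"
    by (rule sum.cong) (use SV Wt in \<open>auto simp: sum_distrib_left\<close>)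
  also have "\<dots> = (\<Sum>v\<in>V - {r}. \<Sum>U\<in>Pow S. mu \<pi> S U * (w v * (1 - ind U v)))"
    by (rule sum.swap)
  also have "\<dots> = (\<Sum>v\<in>V - {r}. w v * Pr \<pi> (S \<inter> desc V r par v))"
  proof (rule sum.cong)
    fix v assume "v \<in> V - {r}"
    have "(\<Sum>U\<in>Pow S. mu \<pi> S U * (w v * (1 - ind U v)))
        = w v * ((\<Sum>U\<in>Pow S. mu \<pi> S U * (if U \<inter> {} = {} then 1 else 0))
                 - (\<Sum>U\<in>Pow S. mu \<pi> S U * ind U v))"
      by (simp add: sum_distrib_left sum_subtractf[symmetric] algebra_simps)
    also have "\<dots> = w v * ((\<Prod>s\<in>S \<inter> {}. 1 - \<pi> s) - (\<Prod>s\<in>S \<inter> desc V r par v. 1 - \<pi> s))"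
      using pow_sum_avoid[OF finS, of \<pi> "{}"] pow_sum_avoid[OF finS, of \<pi> "desc V r par v"]
      unfolding ind_def by simp
    also have "\<dots> = w v * Pr \<pi> (S \<inter> desc V r par v)"
      unfolding Pr_def by simp
    finally show "(\<Sum>U\<in>Pow S. mu \<pi> S U * (w v * (1 - ind U v))) = w v * Pr \<pi> (S \<inter> desc V r par v)" .
  qed simp
  finally show ?thesis .
qed

lemma Pr_empty: "Pr \<pi> {} = 0"
  unfolding Pr_def by simp

lemma G_H:
  assumes aV: "a \<in> V" and S: "S \<subseteq> desc V r par a"
  shows "G r par w \<pi> p S (dpath r par w a)
     = (\<Sum>s\<in>S. p s * \<pi> s) - (\<Sum>v\<in>V - {r} - anc r par a. w v * Pr \<pi> (S \<inter> desc V r par v))"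
proof -
  have SV: "S \<subseteq> V" using S desc_V by blast
  have ancV: "anc r par a \<subseteq> V" using anc_V aV by blast
  have sub: "anc r par a - {r} \<subseteq> V - {r}" using ancV by blast
  have dd: "V - {r} - (anc r par a - {r}) = V - {r} - anc r par a" by blast
  have fin1: "finite (anc r par a - {r})" using ancV finV finite_subset by blast
  have fin2: "finite (V - {r} - anc r par a)" using finV by simp
  have "(\<Sum>v\<in>V - {r}. w v * Pr \<pi> (S \<inter> desc V r par v))
      = (\<Sum>v\<in>anc r par a - {r}. w v * Pr \<pi> (S \<inter> desc V r par v))
        + (\<Sum>v\<in>V - {r} - anc r par a. w v * Pr \<pi> (S \<inter> desc V r par v))"
    using sum.subset_diff[OF sub, of "\<lambda>v. w v * Pr \<pi> (S \<inter> desc V r par v)"] finV dd by simp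
  moreover have "(\<Sum>v\<in>anc r par a - {r}. w v * Pr \<pi> (S \<inter> desc V r par v))
      = (\<Sum>v\<in>anc r par a - {r}. w v * Pr \<pi> S)"
  proof (rule sum.cong)
    fix v assume "v \<in> anc r par a - {r}"
    then have "S \<inter> desc V r par v = S" using desc_anc[of v a] S by blast
    then show "w v * Pr \<pi> (S \<inter> desc V r par v) = w v * Pr \<pi> S" by simp
  qed simp
  moreover have "(\<Sum>v\<in>anc r par a - {r}. w v * Pr \<pi> S) = dpath r par w a * Pr \<pi> S"
    unfolding dpath_def by (simp add: sum_distrib_right)
  ultimately show ?thesis
    unfolding G_def expW_eq[OF SV] by simp
qed

lemma Pr_point:
  assumes aV: "a \<in> V" and vV: "v \<in> V" and na: "v \<notin> anc r par a" and S: "S \<subseteq> desc V r par a"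
  shows "Pr \<pi> (S \<inter> desc V r par v) = (\<Sum>c\<in>children V r par a. Pr \<pi> (S \<inter> desc V r par c \<inter> desc V r par v))"
proof (cases "\<exists>c0\<in>children V r par a. v \<in> desc V r par c0")
  case True
  then obtain c0 where c0: "c0 \<in> children V r par a" "v \<in> desc V r par c0" by blast
  have finC: "finite (children V r par a)" using finV unfolding children_def by simp
  have "(\<Sum>c\<in>children V r par a. Pr \<pi> (S \<inter> desc V r par c \<inter> desc V r par v))
      = (\<Sum>c\<in>children V r par a. if c = c0 then Pr \<pi> (S \<inter> desc V r par v) else 0)"
  proof (rule sum.cong)
    fix c assume c: "c \<in> children V r par a"
    show "Pr \<pi> (S \<inter> desc V r par c \<inter> desc V r par v) = (if c = c0 then Pr \<pi> (S \<inter> desc V r par v) else 0)"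
    proof (cases "c = c0")
      case True
      then have "S \<inter> desc V r par c \<inter> desc V r par v = S \<inter> desc V r par v"
        using desc_mono[OF c0(2)] by blast
      then show ?thesis using True by simp
    next
      case False
      then have "desc V r par c \<inter> desc V r par c0 = {}" using child_disj[OF c c0(1)] by simp
      then have "S \<inter> desc V r par c \<inter> desc V r par v = {}" using desc_mono[OF c0(2)] by blast
      then show ?thesis using False Pr_empty by simp
    qed
  qed simp
  also have "\<dots> = Pr \<pi> (S \<inter> desc V r par v)" using finC c0(1) by simp
  finally show ?thesis by simp
next
  case False
  have e: "S \<inter> desc V r par v = {}"
  proof (rule ccontr)
    assume "S \<inter> desc V r par v \<noteq> {}"
    then obtain q where q: "q \<in> S" "q \<in> desc V r par v" by blast
    then have "q \<in> desc V r par a" using S by blast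
    then show False using off_path_child[OF aV vV na _ q(2)] False by blast
  qed
  then have "\<And>c. S \<inter> desc V r par c \<inter> desc V r par v = {}" by blast
  then show ?thesis using e by (simp add: Pr_def)
qed

lemma G_decomp:
  assumes aV: "a \<in> V" and S: "S \<subseteq> desc V r par a"
  shows "G r par w \<pi> p S (dpath r par w a)
    = G r par w \<pi> p (S \<inter> {a}) (dpath r par w a)
      + (\<Sum>c\<in>children V r par a. G r par w \<pi> p (S \<inter> desc V r par c) (dpath r par w a))"
proof -
  let ?C = "children V r par a"
  let ?N = "V - {r} - anc r par a"
  let ?f = "\<lambda>s. p s * \<pi> s"
  have finC: "finite ?C" using finV unfolding children_def by simp
  have SV: "S \<subseteq> V" using S desc_V by blast
  have finS: "finite S" using SV finV finite_subset by blast
  have S0: "S \<inter> {a} \<subseteq> desc V r par a" using S by blast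
  have Sc: "S \<inter> desc V r par c \<subseteq> desc V r par a" if "c \<in> ?C" for c
    using child_desc_sub[OF that] by blast
  have Seq: "S = (S \<inter> {a}) \<union> (\<Union>c\<in>?C. S \<inter> desc V r par c)"
  proof
    show "S \<subseteq> (S \<inter> {a}) \<union> (\<Union>c\<in>?C. S \<inter> desc V r par c)"
    proof
      fix s assume s: "s \<in> S"
      then have "s \<in> insert a (\<Union>c\<in>?C. desc V r par c)" using S desc_split[of a] by blast
      then show "s \<in> (S \<inter> {a}) \<union> (\<Union>c\<in>?C. S \<inter> desc V r par c)" using s by blast
    qed
  qed blast
  have fU: "finite (\<Union>c\<in>?C. S \<inter> desc V r par c)" using finS by (rule finite_subset[rotated]) blast
  have f0: "finite (S \<inter> {a})" by simp
  have d0: "(S \<inter> {a}) \<inter> (\<Union>c\<in>?C. S \<inter> desc V r par c) = {}"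
    using a_notin_child[OF aV] by blast
  have fc: "\<forall>c\<in>?C. finite (S \<inter> desc V r par c)" using finS by blast
  have dc: "\<forall>c1\<in>?C. \<forall>c2\<in>?C. c1 \<noteq> c2 \<longrightarrow> (S \<inter> desc V r par c1) \<inter> (S \<inter> desc V r par c2) = {}"
  proof (intro ballI impI)
    fix c1 c2 assume "c1 \<in> ?C" "c2 \<in> ?C" "c1 \<noteq> c2"
    then have "desc V r par c1 \<inter> desc V r par c2 = {}" by (rule child_disj)
    then show "(S \<inter> desc V r par c1) \<inter> (S \<inter> desc V r par c2) = {}" by blast
  qed
  have A: "(\<Sum>s\<in>S. ?f s) = (\<Sum>s\<in>S \<inter> {a}. ?f s) + (\<Sum>c\<in>?C. \<Sum>s\<in>S \<inter> desc V r par c. ?f s)"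
  proof -
    have "(\<Sum>s\<in>S. ?f s) = (\<Sum>s\<in>(S \<inter> {a}) \<union> (\<Union>c\<in>?C. S \<inter> desc V r par c). ?f s)"
      using Seq by simp
    also have "\<dots> = (\<Sum>s\<in>S \<inter> {a}. ?f s) + (\<Sum>s\<in>(\<Union>c\<in>?C. S \<inter> desc V r par c). ?f s)"
      by (rule sum.union_disjoint[OF f0 fU d0])
    also have "(\<Sum>s\<in>(\<Union>c\<in>?C. S \<inter> desc V r par c). ?f s) = (\<Sum>c\<in>?C. \<Sum>s\<in>S \<inter> desc V r par c. ?f s)"
      by (rule sum.UNION_disjoint[OF finC fc dc])
    finally show ?thesis .
  qed
  have B0: "(\<Sum>v\<in>?N. w v * Pr \<pi> (S \<inter> {a} \<inter> desc V r par v)) = 0"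
  proof (rule sum.neutral, rule ballI)
    fix v assume v: "v \<in> ?N"
    have "a \<notin> desc V r par v" using v unfolding desc_def by blast
    then have "S \<inter> {a} \<inter> desc V r par v = {}" by blast
    then show "w v * Pr \<pi> (S \<inter> {a} \<inter> desc V r par v) = 0" by (simp add: Pr_empty)
  qed
  have B: "(\<Sum>v\<in>?N. w v * Pr \<pi> (S \<inter> desc V r par v))
      = (\<Sum>c\<in>?C. \<Sum>v\<in>?N. w v * Pr \<pi> (S \<inter> desc V r par c \<inter> desc V r par v))"
  proof -
    have "(\<Sum>v\<in>?N. w v * Pr \<pi> (S \<inter> desc V r par v))
        = (\<Sum>v\<in>?N. w v * (\<Sum>c\<in>?C. Pr \<pi> (S \<inter> desc V r par c \<inter> desc V r par v)))"
      by (rule sum.cong) (use Pr_point[OF aV _ _ S] in auto)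
    also have "\<dots> = (\<Sum>v\<in>?N. \<Sum>c\<in>?C. w v * Pr \<pi> (S \<inter> desc V r par c \<inter> desc V r par v))"
      by (simp add: sum_distrib_left)
    also have "\<dots> = (\<Sum>c\<in>?C. \<Sum>v\<in>?N. w v * Pr \<pi> (S \<inter> desc V r par c \<inter> desc V r par v))"
      by (rule sum.swap)
    finally show ?thesis .
  qed
  have "(\<Sum>c\<in>?C. G r par w \<pi> p (S \<inter> desc V r par c) (dpath r par w a))
      = (\<Sum>c\<in>?C. (\<Sum>s\<in>S \<inter> desc V r par c. ?f s) - (\<Sum>v\<in>?N. w v * Pr \<pi> (S \<inter> desc V r par c \<inter> desc V r par v)))"
    by (rule sum.cong) (use G_H[OF aV Sc] in auto)
  also have "\<dots> = (\<Sum>c\<in>?C. \<Sum>s\<in>S \<inter> desc V r par c. ?f s) - (\<Sum>c\<in>?C. \<Sum>v\<in>?N. w v * Pr \<pi> (S \<inter> desc V r par c \<inter> desc V r par v))"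
    by (rule sum_subtractf)
  finally have CC: "(\<Sum>c\<in>?C. G r par w \<pi> p (S \<inter> desc V r par c) (dpath r par w a))
      = (\<Sum>c\<in>?C. \<Sum>s\<in>S \<inter> desc V r par c. ?f s) - (\<Sum>c\<in>?C. \<Sum>v\<in>?N. w v * Pr \<pi> (S \<inter> desc V r par c \<inter> desc V r par v))" .
  show ?thesis
    using CC G_H[OF aV S, of w \<pi> p] G_H[OF aV S0, of w \<pi> p] A B B0 by linarith
qed

end

lemma sum_eq_parts:
  fixes f g :: "'a \<Rightarrow> real"
  assumes "finite I" "x \<le> y" "\<And>i. i \<in> I \<Longrightarrow> f i \<le> g i" "x + sum f I = y + sum g I"
  shows "x = y \<and> (\<forall>i\<in>I. f i = g i)"
proof -
  have "sum f I \<le> sum g I" using assms(3) by (rule sum_mono)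
  then have xy: "x = y" using assms(2,4) by linarith
  then have "sum (\<lambda>i. g i - f i) I = 0" using assms(4) by (simp add: sum_subtractf)
  moreover have nn: "\<And>i. i \<in> I \<Longrightarrow> 0 \<le> g i - f i" using assms(3) by simp
  have iff: "sum (\<lambda>i. g i - f i) I = 0 \<longleftrightarrow> (\<forall>i\<in>I. g i - f i = 0)"
    by (rule sum_nonneg_eq_0_iff[OF assms(1) nn])
  ultimately have "\<forall>i\<in>I. g i - f i = 0" by (simp only: iff)
  then show ?thesis using xy by simp
qed

theorem proposition8:
  fixes V :: "'v set" and r :: 'v and par :: "'v \<Rightarrow> 'v"
    and w \<pi> p :: "'v \<Rightarrow> real" and a :: 'v
    and S0 :: "'v set" and S :: "'v \<Rightarrow> 'v set"
  assumes tree: "rooted_tree V r par"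
    and w_nonneg: "\<forall>v\<in>V - {r}. 0 \<le> w v"
    and \<pi>_range: "\<forall>v\<in>V. 0 < \<pi> v \<and> \<pi> v \<le> 1"
    and a_in: "a \<in> V"
    and S0: "largest_optimal r par w \<pi> p {a} (dpath r par w a) S0"
    and Si: "\<forall>c\<in>children V r par a.
               largest_optimal r par w \<pi> p (desc V r par c) (dpath r par w a) (S c)"
  shows "largest_optimal r par w \<pi> p (desc V r par a) (dpath r par w a)
           (S0 \<union> (\<Union>c\<in>children V r par a. S c))"
proof -
  let ?D = "desc V r par a"
  let ?C = "children V r par a"
  let ?x = "dpath r par w a"
  let ?S = "S0 \<union> (\<Union>c\<in>?C. S c)"
  let ?G = "\<lambda>T. G r par w \<pi> p T ?x"
  have o0: "S0 \<subseteq> {a}" "\<And>T. T \<subseteq> {a} \<Longrightarrow> ?G T \<le> ?G S0"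
    "\<And>T. optimal r par w \<pi> p {a} ?x T \<Longrightarrow> T \<subseteq> S0"
  proof -
    have L0: "optimal r par w \<pi> p {a} ?x S0" and M0: "\<forall>T. optimal r par w \<pi> p {a} ?x T \<longrightarrow> T \<subseteq> S0"
      using S0 unfolding largest_optimal_def by simp_all
    show "S0 \<subseteq> {a}" using L0 unfolding optimal_def by (elim conjE)
    show "\<And>T. T \<subseteq> {a} \<Longrightarrow> ?G T \<le> ?G S0" using L0 unfolding optimal_def by simp
    show "\<And>T. optimal r par w \<pi> p {a} ?x T \<Longrightarrow> T \<subseteq> S0" using M0 by simp
  qed
  have oc: "S c \<subseteq> desc V r par c" "\<And>T. T \<subseteq> desc V r par c \<Longrightarrow> ?G T \<le> ?G (S c)"
    "\<And>T. optimal r par w \<pi> p (desc V r par c) ?x T \<Longrightarrow> T \<subseteq> S c"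
    if "c \<in> ?C" for c
  proof -
    have L: "largest_optimal r par w \<pi> p (desc V r par c) ?x (S c)" using Si that by (rule bspec)
    have L0: "optimal r par w \<pi> p (desc V r par c) ?x (S c)" and M0: "\<forall>T. optimal r par w \<pi> p (desc V r par c) ?x T \<longrightarrow> T \<subseteq> S c"
      using L unfolding largest_optimal_def by simp_all
    show "S c \<subseteq> desc V r par c" using L0 unfolding optimal_def by (elim conjE)
    show "\<And>T. T \<subseteq> desc V r par c \<Longrightarrow> ?G T \<le> ?G (S c)" using L0 unfolding optimal_def by simp
    show "\<And>T. optimal r par w \<pi> p (desc V r par c) ?x T \<Longrightarrow> T \<subseteq> S c" using M0 by simp
  qed
  have finC: "finite ?C" using finV[OF tree] unfolding children_def by simp
  have Ssub: "?S \<subseteq> ?D"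
  proof -
    have "S0 \<subseteq> ?D" using o0(1) self_desc[OF tree a_in] by blast
    moreover have "S c \<subseteq> ?D" if "c \<in> ?C" for c
      using oc(1)[OF that] child_desc_sub[OF tree that] by blast
    ultimately show ?thesis by blast
  qed
  have int0: "?S \<inter> {a} = S0"
  proof -
    have "S c \<inter> {a} = {}" if "c \<in> ?C" for c
      using oc(1)[OF that] a_notin_child[OF tree a_in that] by blast
    then show ?thesis using o0(1) by blast
  qed
  have intc: "?S \<inter> desc V r par c = S c" if c: "c \<in> ?C" for c
  proof -
    have "S0 \<inter> desc V r par c = {}" using o0(1) a_notin_child[OF tree a_in c] by blast
    moreover have "S c' \<inter> desc V r par c = {}" if "c' \<in> ?C" "c' \<noteq> c" for c'
      using oc(1)[OF that(1)] child_disj[OF tree that(1) c that(2)] by blast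
    ultimately show ?thesis using oc(1)[OF c] c by blast
  qed
  have GS: "?G ?S = ?G S0 + (\<Sum>c\<in>?C. ?G (S c))"
  proof -
    have "(\<Sum>c\<in>?C. ?G (?S \<inter> desc V r par c)) = (\<Sum>c\<in>?C. ?G (S c))"
      by (rule sum.cong) (simp_all only: intc)
    then show ?thesis using G_decomp[OF tree a_in Ssub, of w \<pi> p] int0 by simp
  qed
  have dec: "?G T = ?G (T \<inter> {a}) + (\<Sum>c\<in>?C. ?G (T \<inter> desc V r par c))"
    "?G (T \<inter> {a}) \<le> ?G S0" "\<And>c. c \<in> ?C \<Longrightarrow> ?G (T \<inter> desc V r par c) \<le> ?G (S c)"
    if "T \<subseteq> ?D" for T
  proof -
    show "?G T = ?G (T \<inter> {a}) + (\<Sum>c\<in>?C. ?G (T \<inter> desc V r par c))"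
      by (rule G_decomp[OF tree a_in that])
    show "?G (T \<inter> {a}) \<le> ?G S0" by (rule o0(2)) blast
    show "\<And>c. c \<in> ?C \<Longrightarrow> ?G (T \<inter> desc V r par c) \<le> ?G (S c)"
      using oc(2) by blast
  qed
  have le: "?G T \<le> ?G ?S" if "T \<subseteq> ?D" for T
  proof -
    have "(\<Sum>c\<in>?C. ?G (T \<inter> desc V r par c)) \<le> (\<Sum>c\<in>?C. ?G (S c))"
      using dec(3)[OF that] by (rule sum_mono)
    then show ?thesis using dec(1,2)[OF that] GS by linarith
  qed
  have opt: "optimal r par w \<pi> p ?D ?x ?S"
    unfolding optimal_def
  proof (intro conjI allI impI)
    show "?S \<subseteq> ?D" by (rule Ssub)
    fix T assume "T \<subseteq> ?D"
    then show "?G T \<le> ?G ?S" by (rule le)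
  qed
  have largest: "T \<subseteq> ?S" if T: "optimal r par w \<pi> p ?D ?x T" for T
  proof -
    have T': "T \<subseteq> ?D \<and> (\<forall>S'. S' \<subseteq> ?D \<longrightarrow> ?G S' \<le> ?G T)"
      using T unfolding optimal_def .
    then have TD: "T \<subseteq> ?D" by (elim conjE)
    have ge: "?G ?S \<le> ?G T" using T' Ssub by blast
    have eq: "?G (T \<inter> {a}) + (\<Sum>c\<in>?C. ?G (T \<inter> desc V r par c)) = ?G S0 + (\<Sum>c\<in>?C. ?G (S c))"
      using le[OF TD] ge dec(1)[OF TD] GS by linarith
    have parts: "?G (T \<inter> {a}) = ?G S0 \<and> (\<forall>c\<in>?C. ?G (T \<inter> desc V r par c) = ?G (S c))"
      by (rule sum_eq_parts[OF finC dec(2)[OF TD] dec(3)[OF TD] eq])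
    have "optimal r par w \<pi> p {a} ?x (T \<inter> {a})"
      unfolding optimal_def
    proof (intro conjI allI impI)
      show "T \<inter> {a} \<subseteq> {a}" by blast
      fix T' assume "T' \<subseteq> {a}"
      then have "?G T' \<le> ?G S0" by (rule o0(2))
      then show "?G T' \<le> ?G (T \<inter> {a})" using parts by simp
    qed
    then have t0: "T \<inter> {a} \<subseteq> S0" by (rule o0(3))
    have tc: "T \<inter> desc V r par c \<subseteq> S c" if c: "c \<in> ?C" for c
    proof -
      have "optimal r par w \<pi> p (desc V r par c) ?x (T \<inter> desc V r par c)"
        unfolding optimal_def
      proof (intro conjI allI impI)
        show "T \<inter> desc V r par c \<subseteq> desc V r par c" by blast
        fix T' assume "T' \<subseteq> desc V r par c"
        then have "?G T' \<le> ?G (S c)" by (rule oc(2)[OF c])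
        moreover have "?G (T \<inter> desc V r par c) = ?G (S c)" using parts c by blast
        ultimately show "?G T' \<le> ?G (T \<inter> desc V r par c)" by simp
      qed
      then show ?thesis by (rule oc(3)[OF c])
    qed
    show ?thesis
    proof
      fix q assume qT: "q \<in> T"
      then have "q \<in> insert a (\<Union>c\<in>?C. desc V r par c)" using TD desc_split[OF tree, of a] by blast
      then show "q \<in> ?S"
      proof
        assume "q = a" then show ?thesis using qT t0 by blast
      next
        assume "q \<in> (\<Union>c\<in>?C. desc V r par c)"
        then obtain c where c: "c \<in> ?C" "q \<in> desc V r par c" by blast
        then show ?thesis using qT tc[OF c(1)] by blast
      qed
    qed
  qed
  show ?thesis unfolding largest_optimal_def
  proof (intro conjI allI impI)
    show "optimal r par w \<pi> p ?D ?x ?S" by (rule opt)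
    fix T assume "optimal r par w \<pi> p ?D ?x T"
    then show "T \<subseteq> ?S" by (rule largest)
  qed
qed

end
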